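(* For every Euclidean modal logic $\mathbf{L}$, $\mathtt{S}_{\mathbf{L}}$ is a closed subset of $\mathbf{N}^{+}\times\mathbf{N}^{-}$.
   Context: Modal formulas (propositional variables, $\bot,\neg,\vee,\Box$) have standard Kripke semantics on frames $(W,R)$ ($W$ non-empty, $R\subseteq W\times W$); validity in a frame means truth at all points under all valuations. A (normal) modal logic contains all tautologies and K axioms and is closed under uniform substitution, modus ponens and necessitation; a Euclidean modal logic is one not containing $\bot$ and containing $\Diamond\psi\to\Box\Diamond\psi$ for all $\psi$. $\mathbf{N}^{+}=\{1,2,\dots\}$, $\mathbf{N}^{-}=\{-1,0,1,\dots\}$. For $m\in\mathbf{N}^{+}$, $n\ge0$, the flower $\mathcal{F}_m^n$ has universe $\{0,\dots,m+n\}$ and relation $(\{0\}\times\{1,\dots,m\})\cup\{1,\dots,m+n\}^2$; $\mathcal{F}_m^{-1}$ has universe $\{1,\dots,m\}$ and relation $\{1,\dots,m\}^2$. $\mathtt{S}_{\mathbf{L}}=\{(m,n)\in\mathbf{N}^{+}\times\mathbf{N}^{-}:\ \mathbf{L}\text{ valid in }\mathcal{F}_m^n\}$. On $\mathbf{N}^{+}\times\mathbf{N}^{-}$, $(m,n)\ll(m',n')$ iff $m\le m'$ and $n\le n'$; a subset $\mathtt{S}$ is closed if $(m,n)\in\mathtt{S}$ and $(m',n')\ll(m,n)$ imply $(m',n')\in\mathtt{S}$. *)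

theory Defs
  imports Main
begin

datatype fm = Var nat | Bot | Neg fm | Or fm fm | Box fm

definition Imp :: "fm \<Rightarrow> fm \<Rightarrow> fm" where
  "Imp a b = Or (Neg a) b"

definition Dia :: "fm \<Rightarrow> fm" where
  "Dia a = Neg (Box (Neg a))"

fun sat :: "'w set \<Rightarrow> ('w \<Rightarrow> 'w \<Rightarrow> bool) \<Rightarrow> (nat \<Rightarrow> 'w \<Rightarrow> bool) \<Rightarrow> 'w \<Rightarrow> fm \<Rightarrow> bool" where
  "sat W R V w (Var p) = V p w"
| "sat W R V w Bot = False"
| "sat W R V w (Neg a) = (\<not> sat W R V w a)"
| "sat W R V w (Or a b) = (sat W R V w a \<or> sat W R V w b)"
| "sat W R V w (Box a) = (\<forall>v\<in>W. R w v \<longrightarrow> sat W R V v a)"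

definition valid_frame :: "'w set \<Rightarrow> ('w \<Rightarrow> 'w \<Rightarrow> bool) \<Rightarrow> fm \<Rightarrow> bool" where
  "valid_frame W R a = (\<forall>V. \<forall>w\<in>W. sat W R V w a)"

definition valid_logic_frame :: "'w set \<Rightarrow> ('w \<Rightarrow> 'w \<Rightarrow> bool) \<Rightarrow> fm set \<Rightarrow> bool" where
  "valid_logic_frame W R L = (\<forall>a\<in>L. valid_frame W R a)"

fun peval :: "(fm \<Rightarrow> bool) \<Rightarrow> fm \<Rightarrow> bool" where
  "peval e (Var p) = e (Var p)"
| "peval e Bot = False"
| "peval e (Neg a) = (\<not> peval e a)"
| "peval e (Or a b) = (peval e a \<or> peval e b)"
| "peval e (Box a) = e (Box a)"

definition tautology :: "fm \<Rightarrow> bool" where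
  "tautology a = (\<forall>e. peval e a)"

fun subst :: "(nat \<Rightarrow> fm) \<Rightarrow> fm \<Rightarrow> fm" where
  "subst s (Var p) = s p"
| "subst s Bot = Bot"
| "subst s (Neg a) = Neg (subst s a)"
| "subst s (Or a b) = Or (subst s a) (subst s b)"
| "subst s (Box a) = Box (subst s a)"

definition normal_logic :: "fm set \<Rightarrow> bool" where
  "normal_logic L =
    ((\<forall>a. tautology a \<longrightarrow> a \<in> L)
   \<and> (\<forall>a b. Imp (Box (Imp a b)) (Imp (Box a) (Box b)) \<in> L)
   \<and> (\<forall>s a. a \<in> L \<longrightarrow> subst s a \<in> L)
   \<and> (\<forall>a b. a \<in> L \<longrightarrow> Imp a b \<in> L \<longrightarrow> b \<in> L)
   \<and> (\<forall>a. a \<in> L \<longrightarrow> Box a \<in> L))"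

definition euclidean_logic :: "fm set \<Rightarrow> bool" where
  "euclidean_logic L =
    (normal_logic L \<and> Bot \<notin> L \<and> (\<forall>a. Imp (Dia a) (Box (Dia a)) \<in> L))"

definition flower_W :: "nat \<Rightarrow> int \<Rightarrow> nat set" where
  "flower_W m n = (if n = -1 then {1..m} else {0..m + nat n})"

definition flower_R :: "nat \<Rightarrow> int \<Rightarrow> nat \<Rightarrow> nat \<Rightarrow> bool" where
  "flower_R m n x y =
    (if n = -1 then (x \<in> {1..m} \<and> y \<in> {1..m})
     else ((x = 0 \<and> y \<in> {1..m}) \<or> (x \<in> {1..m + nat n} \<and> y \<in> {1..m + nat n})))"

definition S_L :: "fm set \<Rightarrow> (nat \<times> int) set" where
  "S_L L = {(m, n). 1 \<le> m \<and> -1 \<le> n \<and> valid_logic_frame (flower_W m n) (flower_R m n) L}"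

definition closed_set :: "(nat \<times> int) set \<Rightarrow> bool" where
  "closed_set S =
    (S \<subseteq> {(m, n). 1 \<le> m \<and> -1 \<le> n} \<and>
     (\<forall>m n m' n'. (m, n) \<in> S \<and> 1 \<le> m' \<and> -1 \<le> n' \<and> m' \<le> m \<and> n' \<le> n \<longrightarrow> (m', n') \<in> S))"

end

theory Submission
  imports Defs
begin

lemma pmorph_sat:
  assumes cl: "\<forall>x\<in>A. \<forall>y\<in>W1. R1 x y \<longrightarrow> y \<in> A" and AW: "A \<subseteq> W1"
    and img: "f ` A \<subseteq> W2"
    and forth: "\<forall>x\<in>A. \<forall>y\<in>A. R1 x y \<longrightarrow> R2 (f x) (f y)"
    and bk: "\<forall>x\<in>A. \<forall>z\<in>W2. R2 (f x) z \<longrightarrow> (\<exists>y\<in>A. R1 x y \<and> f y = z)"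
  shows "x \<in> A \<Longrightarrow> sat W2 R2 V (f x) a = sat W1 R1 (\<lambda>p w. V p (f w)) x a"
proof (induction a arbitrary: x)
  case (Box a)
  show ?case
  proof
    assume h: "sat W2 R2 V (f x) (Box a)"
    show "sat W1 R1 (\<lambda>p w. V p (f w)) x (Box a)"
    proof (simp, intro ballI impI)
      fix y assume "y \<in> W1" "R1 x y"
      then have "y \<in> A" using cl Box.prems by blast
      then show "sat W1 R1 (\<lambda>p w. V p (f w)) y a"
      proof -
        have "f y \<in> W2" using \<open>y \<in> A\<close> img by blast
        moreover have "R2 (f x) (f y)" using forth Box.prems \<open>y \<in> A\<close> \<open>R1 x y\<close> by blast
        ultimately have "sat W2 R2 V (f y) a" using h by simp
        then show ?thesis using Box.IH[OF \<open>y \<in> A\<close>] by simp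
      qed
    qed
  next
    assume h: "sat W1 R1 (\<lambda>p w. V p (f w)) x (Box a)"
    show "sat W2 R2 V (f x) (Box a)"
    proof (simp, intro ballI impI)
      fix z assume "z \<in> W2" "R2 (f x) z"
      then obtain y where "y \<in> A" "R1 x y" "f y = z" using bk Box.prems by blast
      then show "sat W2 R2 V z a" using h Box.IH AW by auto
    qed
  qed
qed auto

lemma pmorph_valid:
  assumes cl: "\<forall>x\<in>A. \<forall>y\<in>W1. R1 x y \<longrightarrow> y \<in> A" and AW: "A \<subseteq> W1"
    and img: "f ` A = W2"
    and forth: "\<forall>x\<in>A. \<forall>y\<in>A. R1 x y \<longrightarrow> R2 (f x) (f y)"
    and bk: "\<forall>x\<in>A. \<forall>z\<in>W2. R2 (f x) z \<longrightarrow> (\<exists>y\<in>A. R1 x y \<and> f y = z)"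
    and v: "valid_frame W1 R1 a"
  shows "valid_frame W2 R2 a"
  unfolding valid_frame_def
proof (intro allI ballI)
  fix V w assume "w \<in> W2"
  then obtain x where "x \<in> A" "w = f x" using img by blast
  then show "sat W2 R2 V w a"
    using pmorph_sat[OF cl AW _ forth bk, of x V a] img v AW
    unfolding valid_frame_def by auto
qed

definition fmap :: "nat \<Rightarrow> nat \<Rightarrow> int \<Rightarrow> nat \<Rightarrow> nat" where
  "fmap m m' n' x = (if x = 0 then 0 else if x \<le> m then min x m'
     else if x - m \<le> nat n' then m' + (x - m) else 1)"

lemma t1: assumes "1 \<le> m'" "m' \<le> m" "-1 \<le> n'" "n' \<le> n" "z \<in> flower_W m' n'"
  shows "fmap m m' n' (if z \<le> m' then z else m + (z - m')) = z"
  using assms by (auto simp: fmap_def flower_W_def split: if_splits)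

lemma t2: assumes "1 \<le> m'" "m' \<le> m" "-1 \<le> n'" "n' \<le> n" "z \<in> flower_W m' n'"
  shows "(if z \<le> m' then z else m + (z - m')) \<in> (if n' = -1 then flower_W m n - {0} else flower_W m n)"
  using assms by (auto simp: flower_W_def split: if_splits)

lemma t3: assumes "1 \<le> m'" "m' \<le> m" "-1 \<le> n'" "n' \<le> n" "x \<in> (if n' = -1 then flower_W m n - {0} else flower_W m n)"
  shows "fmap m m' n' x \<in> flower_W m' n'"
  using assms by (auto simp: fmap_def flower_W_def split: if_splits)

lemma t4: assumes "1 \<le> m'" "m' \<le> m" "-1 \<le> n'" "n' \<le> n" "x \<in> (if n' = -1 then flower_W m n - {0} else flower_W m n)"
  "z \<in> flower_W m' n'" "flower_R m' n' (fmap m m' n' x) z"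
  shows "flower_R m n x (if z \<le> m' then z else m + (z - m'))"
  using assms by (auto simp: fmap_def flower_W_def flower_R_def split: if_splits)

lemma t5: assumes "1 \<le> m'" "m' \<le> m" "-1 \<le> n'" "n' \<le> n" "x \<in> (if n' = -1 then flower_W m n - {0} else flower_W m n)"
  "y \<in> (if n' = -1 then flower_W m n - {0} else flower_W m n)" "flower_R m n x y"
  shows "flower_R m' n' (fmap m m' n' x) (fmap m m' n' y)"
  using assms by (auto simp: fmap_def flower_W_def flower_R_def split: if_splits)

lemma flower_pmorph:
  assumes a: "1 \<le> m'" "m' \<le> m" "-1 \<le> n'" "n' \<le> n"
    and v: "valid_frame (flower_W m n) (flower_R m n) a"
  shows "valid_frame (flower_W m' n') (flower_R m' n') a"
proof (rule pmorph_valid[where A = "if n' = -1 then flower_W m n - {0} else flower_W m n"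
      and f = "fmap m m' n'", OF _ _ _ _ _ v])
  show "\<forall>x\<in>(if n' = -1 then flower_W m n - {0} else flower_W m n). \<forall>y\<in>flower_W m n.
     flower_R m n x y \<longrightarrow> y \<in> (if n' = -1 then flower_W m n - {0} else flower_W m n)"
    using a by (auto simp: flower_W_def flower_R_def)
  show "(if n' = -1 then flower_W m n - {0} else flower_W m n) \<subseteq> flower_W m n" by auto
  show "fmap m m' n' ` (if n' = -1 then flower_W m n - {0} else flower_W m n) = flower_W m' n'"
  proof
    show "fmap m m' n' ` (if n' = -1 then flower_W m n - {0} else flower_W m n) \<subseteq> flower_W m' n'"
      using t3[OF a] by blast
    show "flower_W m' n' \<subseteq> fmap m m' n' ` (if n' = -1 then flower_W m n - {0} else flower_W m n)"
    proof
      fix z assume z: "z \<in> flower_W m' n'"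
      show "z \<in> fmap m m' n' ` (if n' = -1 then flower_W m n - {0} else flower_W m n)"
        using t2[OF a z] by (rule rev_image_eqI) (rule t1[OF a z, symmetric])
    qed
  qed
  show "\<forall>x\<in>(if n' = -1 then flower_W m n - {0} else flower_W m n).
     \<forall>y\<in>(if n' = -1 then flower_W m n - {0} else flower_W m n).
       flower_R m n x y \<longrightarrow> flower_R m' n' (fmap m m' n' x) (fmap m m' n' y)"
    using t5[OF a] by blast
  show "\<forall>x\<in>(if n' = -1 then flower_W m n - {0} else flower_W m n). \<forall>z\<in>flower_W m' n'.
     flower_R m' n' (fmap m m' n' x) z \<longrightarrow>
       (\<exists>y\<in>(if n' = -1 then flower_W m n - {0} else flower_W m n).
         flower_R m n x y \<and> fmap m m' n' y = z)"
  proof (intro ballI impI)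
    fix x z assume x: "x \<in> (if n' = -1 then flower_W m n - {0} else flower_W m n)"
      and z: "z \<in> flower_W m' n'" and r: "flower_R m' n' (fmap m m' n' x) z"
    show "\<exists>y\<in>(if n' = -1 then flower_W m n - {0} else flower_W m n).
         flower_R m n x y \<and> fmap m m' n' y = z"
      using t4[OF a x z r] t1[OF a z] t2[OF a z] by blast
  qed
qed

theorem lemma35:
  assumes "euclidean_logic L"
  shows "closed_set (S_L L)"
  unfolding closed_set_def S_L_def valid_logic_frame_def
  using flower_pmorph by auto

end
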